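(* The $\mathcal{P}_+$-coadjoint orbit through $dT$ coincides with the affine subspace $dT+\mathfrak{U}_-^*\subset\mathfrak{b}_k^*$.
   Context: Let $\mathfrak{g}=\mathfrak{gl}_n(\mathbb{C})$, $\mathfrak{t}$ a Cartan subalgebra, $k>1$, $T=\sum_{i=1}^{k-1}T_iz^{-i}$, $T_i\in\mathfrak{t}$, $T_{k-1}\ne0$, $dT=\sum_i(-iT_i)z^{-i-1}dz$. $B_k=\{\sum_{i=0}^{k-1}b_iz^i:b_0=1,b_i\in\mathfrak{g}\}\subset\mathrm{GL}_n(\mathbb{C}[z]/(z^k))$; $\mathfrak{b}_k^*=\{\sum_{i=1}^{k-1}X_iz^{-i-1}dz:X_i\in\mathfrak{g}\}$ via $\mathrm{res}_{z=0}\mathrm{tr}$; coadjoint action $\mathrm{Ad}^*_bB$ = part of $bBb^{-1}$ in degrees $z^{-i-1}dz$, $1\le i\le k-1$. For $i=0,\dots,k-2$, $\mathbb{C}^n=\bigoplus_{p\in J_i}V^{(i)}_p$ is the decomposition into simultaneous eigenspaces of $(T_{i+1},\dots,T_{k-1})$, $\pi_i:J_j\to J_i$ natural; total orders on the $J_i$ fixed with $\pi_{i+1}(p)<\pi_{i+1}(q)\Rightarrow p<q$. $\mathfrak{p}_i^+=\bigoplus_{p\ge q}\mathrm{Hom}(V^{(i)}_p,V^{(i)}_q)$, $\mathfrak{u}_i^+=\bigoplus_{p>q}\mathrm{Hom}(V^{(i)}_p,V^{(i)}_q)$, $\mathfrak{p}^+_{k-1}=\mathfrak{g}$, $\mathfrak{u}^+_{k-1}=0$.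 $\mathcal{P}_+=\{b\in B_k:b_i\in\mathfrak{p}_i^+\ (1\le i\le k-1)\}$ (a subgroup), $\mathfrak{U}_-^*=\{\sum_{i=1}^{k-1}X_iz^{-i-1}dz:X_i\in\mathfrak{u}_i^+\}$. *)

theory Defs
  imports "HOL-Analysis.Analysis"
begin

text \<open>n x n complex matrices, indexed by a finite type 'n (so n = CARD('n)).
  An element of the truncated polynomial ring gl_n(C[z]/(z^k)) is a coefficient
  sequence nat => matrix, normalised to vanish in degrees >= k.
  An element sum_{i=1}^{k-1} X_i z^{-i-1} dz of b_k^* is a sequence X with
  X 0 = 0 and X i = 0 for i >= k.\<close>

type_synonym 'n cmat = "complex ^ 'n ^ 'n"

text \<open>Inverse in C[z]/(z^k) of b with b 0 = 1 (coefficients; truncation applied later).\<close>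
fun tinv :: "(nat \<Rightarrow> 'n::finite cmat) \<Rightarrow> nat \<Rightarrow> 'n cmat" where
  "tinv b 0 = mat 1"
| "tinv b (Suc m) = - (\<Sum>a\<in>{..m}. b (Suc a) ** tinv b (m - a))"

definition in_Bk :: "nat \<Rightarrow> (nat \<Rightarrow> 'n::finite cmat) \<Rightarrow> bool" where
  "in_Bk k b \<longleftrightarrow> b 0 = mat 1 \<and> (\<forall>i\<ge>k. b i = 0)"

definition in_bkdual :: "nat \<Rightarrow> (nat \<Rightarrow> 'n::finite cmat) \<Rightarrow> bool" where
  "in_bkdual k X \<longleftrightarrow> X 0 = 0 \<and> (\<forall>i\<ge>k. X i = 0)"

text \<open>Coadjoint action: the z^{-j-1}dz part (1 <= j <= k-1) of b B b^{-1}.\<close>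
definition coad :: "nat \<Rightarrow> (nat \<Rightarrow> 'n::finite cmat) \<Rightarrow> (nat \<Rightarrow> 'n cmat) \<Rightarrow> nat \<Rightarrow> 'n cmat" where
  "coad k b X = (\<lambda>j. if 1 \<le> j \<and> j < k then
      (\<Sum>i\<in>{j..<k}. \<Sum>a\<in>{..i - j}. b a ** X i ** tinv b (i - j - a)) else 0)"

definition diag_mat :: "'n::finite cmat \<Rightarrow> bool" where
  "diag_mat A \<longleftrightarrow> (\<forall>a b. a \<noteq> b \<longrightarrow> A $ a $ b = 0)"

definition dT :: "nat \<Rightarrow> (nat \<Rightarrow> 'n::finite cmat) \<Rightarrow> nat \<Rightarrow> 'n cmat" where
  "dT k T = (\<lambda>i. if 1 \<le> i \<and> i < k then - (of_nat i) *\<^sub>R T i else 0)"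

text \<open>Basis indices a, b lie in the same simultaneous eigenspace V^{(i)}_p of
  (T_{i+1},...,T_{k-1}) (T diagonal).\<close>
definition same_eig :: "nat \<Rightarrow> (nat \<Rightarrow> 'n::finite cmat) \<Rightarrow> nat \<Rightarrow> 'n \<Rightarrow> 'n \<Rightarrow> bool" where
  "same_eig k T i a b \<longleftrightarrow> (\<forall>j. i < j \<and> j < k \<longrightarrow> T j $ a $ a = T j $ b $ b)"

text \<open>A total order on J_i is encoded as a total preorder ord i on basis indices whose
  indifference classes are exactly the eigenspace classes: ord i a b means
  class(a) <= class(b) in J_i.\<close>
definition admissible_orders ::
  "nat \<Rightarrow> (nat \<Rightarrow> 'n::finite cmat) \<Rightarrow> (nat \<Rightarrow> 'n \<Rightarrow> 'n \<Rightarrow> bool) \<Rightarrow> bool" where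
  "admissible_orders k T ord \<longleftrightarrow>
     (\<forall>i. i \<le> k - 2 \<longrightarrow>
        (\<forall>a b c. ord i a b \<longrightarrow> ord i b c \<longrightarrow> ord i a c) \<and>
        (\<forall>a b. ord i a b \<or> ord i b a) \<and>
        (\<forall>a b. (ord i a b \<and> ord i b a) \<longleftrightarrow> same_eig k T i a b)) \<and>
     (\<forall>i a b. i + 1 \<le> k - 2 \<longrightarrow>
        (ord (i+1) a b \<and> \<not> ord (i+1) b a) \<longrightarrow> (ord i a b \<and> \<not> ord i b a))"

text \<open>p_i^+ = sum_{p>=q} Hom(V_p,V_q); entry X$a$b maps e_b to e_a.\<close>
definition in_p_plus :: "nat \<Rightarrow> (nat \<Rightarrow> 'n::finite \<Rightarrow> 'n \<Rightarrow> bool) \<Rightarrow> nat \<Rightarrow> 'n cmat \<Rightarrow> bool" where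
  "in_p_plus k ord i X \<longleftrightarrow> (k - 1 \<le> i \<or> (\<forall>a b. X $ a $ b \<noteq> 0 \<longrightarrow> ord i a b))"

definition in_u_plus :: "nat \<Rightarrow> (nat \<Rightarrow> 'n::finite \<Rightarrow> 'n \<Rightarrow> bool) \<Rightarrow> nat \<Rightarrow> 'n cmat \<Rightarrow> bool" where
  "in_u_plus k ord i X \<longleftrightarrow> (if k - 1 \<le> i then X = 0
      else (\<forall>a b. X $ a $ b \<noteq> 0 \<longrightarrow> ord i a b \<and> \<not> ord i b a))"

definition P_plus :: "nat \<Rightarrow> (nat \<Rightarrow> 'n::finite \<Rightarrow> 'n \<Rightarrow> bool) \<Rightarrow> (nat \<Rightarrow> 'n cmat) set" where
  "P_plus k ord = {b. in_Bk k b \<and> (\<forall>i. 1 \<le> i \<and> i \<le> k - 1 \<longrightarrow> in_p_plus k ord i (b i))}"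

definition U_minus_dual :: "nat \<Rightarrow> (nat \<Rightarrow> 'n::finite \<Rightarrow> 'n \<Rightarrow> bool) \<Rightarrow> (nat \<Rightarrow> 'n cmat) set" where
  "U_minus_dual k ord = {X. in_bkdual k X \<and> (\<forall>i. 1 \<le> i \<and> i \<le> k - 1 \<longrightarrow> in_u_plus k ord i (X i))}"

end

theory Submission
  imports Defs
begin

lemma msum_left: "(\<Sum>x\<in>S. f x) ** (B::'n::finite cmat) = (\<Sum>x\<in>S. f x ** B)"
  by (simp add: vec_eq_iff matrix_matrix_mult_def sum_distrib_right sum_component sum.swap[of _ S])

lemma msum_right: "(B::'n::finite cmat) ** (\<Sum>x\<in>S. f x) = (\<Sum>x\<in>S. B ** f x)"
  by (simp add: vec_eq_iff matrix_matrix_mult_def sum_distrib_left sum_component sum.swap[of _ S])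

lemma mdiff_left: "((A::'n::finite cmat) - B) ** C = A ** C - B ** C"
  by (simp add: vec_eq_iff matrix_matrix_mult_def algebra_simps sum_subtractf)

lemma madd_left: "((A::'n::finite cmat) + B) ** C = A ** C + B ** C"
  by (simp add: vec_eq_iff matrix_matrix_mult_def algebra_simps sum.distrib)

lemma tinv_rinv:
  assumes "b 0 = mat 1"
  shows "(\<Sum>a\<le>m. b a ** tinv b (m - a)) = (if m = 0 then mat 1 else (0::'n::finite cmat))"
proof (cases m)
  case 0 then show ?thesis using assms by simp
next
  case (Suc n)
  have "(\<Sum>a\<le>Suc n. b a ** tinv b (Suc n - a)) = b 0 ** tinv b (Suc n) + (\<Sum>a\<le>n. b (Suc a) ** tinv b (n - a))"
    by (subst sum.atMost_Suc_shift) simp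
  also have "\<dots> = 0" using assms by simp
  finally show ?thesis using Suc by simp
qed

lemma tri_box:
  fixes F :: "nat \<Rightarrow> nat \<Rightarrow> 'n::finite cmat"
  assumes "\<And>a c. j + a + c \<ge> k \<Longrightarrow> F a c = 0" "j \<le> k"
  shows "(\<Sum>m<k - j. \<Sum>a\<le>m. F a (m - a)) = (\<Sum>c<k. \<Sum>a<k. F a c)"
proof -
  have "(\<Sum>m<k - j. \<Sum>a\<le>m. F a (m - a)) = (\<Sum>(a,c)\<in>{(a,c). a + c < k - j}. F a c)"
    by (rule sum.triangle_reindex[symmetric])
  also have "\<dots> = (\<Sum>(a,c)\<in>{..<k} \<times> {..<k}. F a c)"
  proof (rule sum.mono_neutral_left)
    have h: "\<And>a c. F a c \<noteq> 0 \<Longrightarrow> a + c < k - j"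
    proof (rule ccontr)
      fix a c assume "F a c \<noteq> 0" "\<not> a + c < k - j"
      then show False using assms by (metis add.assoc add.commute le_diff_conv not_le)
    qed
    show "\<forall>i\<in>{..<k} \<times> {..<k} - {(a,c). a + c < k - j}. (case i of (a,c) \<Rightarrow> F a c) = 0"
      using h by fastforce
  qed auto
  also have "\<dots> = (\<Sum>a<k. \<Sum>c<k. F a c)" by (simp add: sum.cartesian_product)
  also have "\<dots> = (\<Sum>c<k. \<Sum>a<k. F a c)" by (rule sum.swap)
  finally show ?thesis .
qed

lemma coad_shift:
  assumes "1 \<le> j" "j < k"
  shows "coad k b X j = (\<Sum>m<k - j. \<Sum>a\<le>m. b a ** X (j + m) ** tinv b (m - a))"
proof -
  have "coad k b X j = (\<Sum>i\<in>{j..<k}. \<Sum>a\<le>i - j. b a ** X i ** tinv b (i - j - a))"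
    using assms by (simp add: coad_def)
  also have "\<dots> = (\<Sum>m\<in>{0..<k - j}. \<Sum>a\<le>m. b a ** X (j + m) ** tinv b (m - a))"
  proof -
    have e: "{j..<k} = (\<lambda>m. m + j) ` {0..<k-j}" using assms
      by (auto simp: image_iff intro!: exI[of _ "x - j" for x])
    show ?thesis unfolding e by (subst sum.reindex) (auto simp: inj_on_def add.commute)
  qed
  finally show ?thesis by (simp add: atLeast0LessThan)
qed

lemma coad_eq_from_rel:
  fixes b X Y :: "nat \<Rightarrow> 'n::finite cmat"
  assumes b0: "b 0 = mat 1"
    and X0: "\<And>i. i \<ge> k \<Longrightarrow> X i = 0" and Y0: "\<And>i. i \<ge> k \<Longrightarrow> Y i = 0" "Y 0 = 0"
    and rel: "\<And>j. j \<ge> 1 \<Longrightarrow> (\<Sum>a<k. b a ** X (j + a)) = (\<Sum>a<k. Y (j + a) ** b a)"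
  shows "coad k b X = Y"
proof
  fix j
  show "coad k b X j = Y j"
  proof (cases "1 \<le> j \<and> j < k")
    case False
    then show ?thesis using Y0 by (auto simp: coad_def not_le)
  next
    case True
    then have j: "1 \<le> j" "j < k" by auto
    have "coad k b X j = (\<Sum>m<k - j. \<Sum>a\<le>m. b a ** X (j + a + (m - a)) ** tinv b (m - a))"
      using j by (simp add: coad_shift)
    also have "\<dots> = (\<Sum>c<k. \<Sum>a<k. b a ** X (j + a + c) ** tinv b c)"
      by (rule tri_box) (use j X0 in auto)
    also have "\<dots> = (\<Sum>c<k. (\<Sum>a<k. b a ** X (j + c + a)) ** tinv b c)"
      by (simp add: msum_left add_ac)
    also have "\<dots> = (\<Sum>c<k. (\<Sum>a<k. Y (j + c + a) ** b a) ** tinv b c)"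
      using j by (simp add: rel)
    also have "\<dots> = (\<Sum>c<k. \<Sum>a<k. Y (j + a + c) ** b a ** tinv b c)"
      by (simp add: msum_left add_ac)
    also have "\<dots> = (\<Sum>m<k - j. \<Sum>a\<le>m. Y (j + a + (m - a)) ** b a ** tinv b (m - a))"
      by (rule tri_box[symmetric]) (use j Y0 in auto)
    also have "\<dots> = (\<Sum>m<k - j. Y (j + m) ** (\<Sum>a\<le>m. b a ** tinv b (m - a)))"
      by (simp add: msum_right matrix_mul_assoc)
    also have "\<dots> = (\<Sum>m<k - j. if m = 0 then Y j else 0)"
      by (rule sum.cong) (auto simp: tinv_rinv[where b=b, OF b0])
    also have "\<dots> = Y j" using j by simp
    finally show ?thesis .
  qed
qed


definition sstr :: "nat \<Rightarrow> (nat \<Rightarrow> 'n \<Rightarrow> 'n \<Rightarrow> bool) \<Rightarrow> nat \<Rightarrow> 'n \<Rightarrow> 'n \<Rightarrow> bool" where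
  "sstr k ord t p q \<longleftrightarrow> t \<le> k - 2 \<and> ord t p q \<and> \<not> ord t q p"

definition supp :: "('n \<Rightarrow> 'n \<Rightarrow> bool) \<Rightarrow> 'n::finite cmat \<Rightarrow> bool" where
  "supp R M \<longleftrightarrow> (\<forall>p q. M $ p $ q \<noteq> 0 \<longrightarrow> R p q)"

lemma supp_zero[simp]: "supp R 0" by (simp add: supp_def)

lemma supp_sum: "(\<And>x. x \<in> S \<Longrightarrow> supp R (f x)) \<Longrightarrow> supp R (\<Sum>x\<in>S. f x)"
  unfolding supp_def
proof (intro allI impI)
  fix p q assume h: "\<And>x. x \<in> S \<Longrightarrow> \<forall>p q. f x $ p $ q \<noteq> 0 \<longrightarrow> R p q"
    and ne: "(\<Sum>x\<in>S. f x) $ p $ q \<noteq> 0"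
  show "R p q"
  proof (rule ccontr)
    assume "\<not> R p q"
    then have "\<forall>x\<in>S. f x $ p $ q = 0" using h by blast
    then have "(\<Sum>x\<in>S. f x) $ p $ q = 0" by simp
    then show False using ne by simp
  qed
qed

lemma supp_mult:
  assumes "supp R1 A" "supp R2 B" "\<And>p r q. R1 p r \<Longrightarrow> R2 r q \<Longrightarrow> R p q"
  shows "supp R (A ** B)"
  unfolding supp_def
proof (intro allI impI)
  fix p q assume ne: "(A ** B) $ p $ q \<noteq> 0"
  show "R p q"
  proof (rule ccontr)
    assume nr: "\<not> R p q"
    have "\<forall>r. A $ p $ r * B $ r $ q = 0"
      using assms nr unfolding supp_def by (metis mult_eq_0_iff)
    then have "(A ** B) $ p $ q = 0" unfolding matrix_matrix_mult_def by (simp add: sum.neutral)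
    then show False using ne by simp
  qed
qed

lemma supp_imp: "supp R M \<Longrightarrow> (\<And>p q. R p q \<Longrightarrow> R' p q) \<Longrightarrow> supp R' M"
  by (auto simp: supp_def)

lemma dT_entry: "dT k T t $ p $ q = (if 1 \<le> t \<and> t < k then - (of_nat t) * T t $ p $ q else 0)"
  by (simp add: dT_def vector_scaleR_component scaleR_conv_of_real[where 'a=complex])

lemma tri_solve:
  fixes c :: "'i \<Rightarrow> 'i \<Rightarrow> complex" and \<mu> :: "'i \<Rightarrow> nat"
  assumes fin: "finite I" and diag: "\<And>i. i \<in> I \<Longrightarrow> c i i \<noteq> 0"
    and tri: "\<And>i i'. i \<in> I \<Longrightarrow> i' \<in> I \<Longrightarrow> i' \<noteq> i \<Longrightarrow> c i i' \<noteq> 0 \<Longrightarrow> \<mu> i' < \<mu> i"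
  shows "\<exists>v. \<forall>i\<in>I. (\<Sum>i'\<in>I. c i i' * v i') = g i"
proof -
  have "\<exists>v. \<forall>i\<in>I. \<mu> i < n \<longrightarrow> (\<Sum>i'\<in>I. c i i' * v i') = g i" for n
  proof (induction n)
    case 0 then show ?case by simp
  next
    case (Suc n)
    then obtain v where v: "\<forall>i\<in>I. \<mu> i < n \<longrightarrow> (\<Sum>i'\<in>I. c i i' * v i') = g i" by blast
    define v' where "v' i = (if \<mu> i = n then (g i - (\<Sum>i'\<in>I - {i}. c i i' * v i')) / c i i else v i)" for i
    have same: "c i i' * v' i' = c i i' * v i'" if "i \<in> I" "i' \<in> I" "i' \<noteq> i" "\<mu> i \<le> n" for i i'
    proof (cases "c i i' = 0")
      case False
      then have "\<mu> i' < \<mu> i" using tri that by blast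
      then show ?thesis using that by (simp add: v'_def)
    qed simp
    show ?case
    proof (intro exI ballI impI)
      fix i assume i: "i \<in> I" "\<mu> i < Suc n"
      have split: "(\<Sum>i'\<in>I. c i i' * w i') = c i i * w i + (\<Sum>i'\<in>I - {i}. c i i' * w i')" for w
        using fin i by (simp add: sum.remove)
      have rest: "(\<Sum>i'\<in>I - {i}. c i i' * v' i') = (\<Sum>i'\<in>I - {i}. c i i' * v i')"
        by (rule sum.cong) (use same i in auto)
      have sp: "(\<Sum>i'\<in>I. c i i' * v' i') = c i i * v' i + (\<Sum>i'\<in>I - {i}. c i i' * v i')"
        using split[of v'] rest by simp
      show "(\<Sum>i'\<in>I. c i i' * v' i') = g i"
      proof (cases "\<mu> i = n")
        case True
        then have "v' i = (g i - (\<Sum>i'\<in>I - {i}. c i i' * v i')) / c i i" by (simp add: v'_def)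
        then show ?thesis using diag[OF i(1)] sp by simp
      next
        case False
        then have "\<mu> i < n" using i by simp
        moreover have "v' i = v i" using False by (simp add: v'_def)
        ultimately show ?thesis using v i sp split[of v] by simp
      qed
    qed
  qed
  then obtain v where v: "\<forall>i\<in>I. \<mu> i < Suc (\<Sum>i\<in>I. \<mu> i) \<longrightarrow> (\<Sum>i'\<in>I. c i i' * v i') = g i" by blast
  have "\<mu> i < Suc (\<Sum>i\<in>I. \<mu> i)" if "i \<in> I" for i
    using member_le_sum[OF that _ fin, of \<mu>] by simp
  then show ?thesis using v by blast
qed


context
  fixes k :: nat and T :: "nat \<Rightarrow> 'n::finite cmat" and ord :: "nat \<Rightarrow> 'n \<Rightarrow> 'n \<Rightarrow> bool"
  assumes k1: "k > 1"
    and diagT: "\<forall>i. 1 \<le> i \<and> i \<le> k - 1 \<longrightarrow> diag_mat (T i)"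
    and adm: "admissible_orders k T ord"
begin

lemma adm1: "t \<le> k - 2 \<Longrightarrow> (\<forall>a b c. ord t a b \<longrightarrow> ord t b c \<longrightarrow> ord t a c) \<and>
        (\<forall>a b. ord t a b \<or> ord t b a) \<and>
        (\<forall>a b. (ord t a b \<and> ord t b a) \<longleftrightarrow> same_eig k T t a b)"
proof -
  assume t: "t \<le> k - 2"
  have h: "t \<le> k - 2 \<longrightarrow> (\<forall>a b c. ord t a b \<longrightarrow> ord t b c \<longrightarrow> ord t a c) \<and>
        (\<forall>a b. ord t a b \<or> ord t b a) \<and>
        (\<forall>a b. (ord t a b \<and> ord t b a) \<longleftrightarrow> same_eig k T t a b)"
    using spec[OF conjunct1[OF adm[unfolded admissible_orders_def]], of t] .
  show ?thesis using mp[OF h t] .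
qed

lemma ord_total: "t \<le> k - 2 \<Longrightarrow> ord t p q \<or> ord t q p"
  using adm1 by blast
lemma ord_refl: "t \<le> k - 2 \<Longrightarrow> ord t p p"
  using ord_total by blast
lemma ord_trans: "t \<le> k - 2 \<Longrightarrow> ord t p r \<Longrightarrow> ord t r q \<Longrightarrow> ord t p q"
  using adm1 by blast
lemma ord_same: "t \<le> k - 2 \<Longrightarrow> (ord t p q \<and> ord t q p) \<longleftrightarrow> same_eig k T t p q"
  using adm1 by blast
lemma chain: "t + 1 \<le> k - 2 \<Longrightarrow> sstr k ord (t+1) p q \<Longrightarrow> sstr k ord t p q"
proof -
  assume t: "t + 1 \<le> k - 2" and s: "sstr k ord (t+1) p q"
  have h: "t + 1 \<le> k - 2 \<longrightarrow> (ord (t+1) p q \<and> \<not> ord (t+1) q p) \<longrightarrow> (ord t p q \<and> \<not> ord t q p)"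
    using spec[OF spec[OF spec[OF conjunct2[OF adm[unfolded admissible_orders_def]], of t], of p], of q] .
  show ?thesis using h t s by (simp add: sstr_def)
qed

lemma str_down: "t \<le> t' \<Longrightarrow> sstr k ord t' p q \<Longrightarrow> sstr k ord t p q"
proof (induction t' rule: dec_induct)
  case base then show ?case .
next
  case (step n) then show ?case using chain[of n] by (simp add: sstr_def)
qed

lemma weak_up: "t \<le> t' \<Longrightarrow> t' \<le> k - 2 \<Longrightarrow> ord t p q \<Longrightarrow> ord t' p q"
proof (rule ccontr)
  assume a: "t \<le> t'" "t' \<le> k - 2" "ord t p q" "\<not> ord t' p q"
  then have "sstr k ord t' q p" using ord_total[of t' p q] by (simp add: sstr_def)
  then have "sstr k ord t q p" using str_down a by blast
  then show False using a by (simp add: sstr_def)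
qed

lemma str_trans1: "sstr k ord t p r \<Longrightarrow> ord t r q \<Longrightarrow> sstr k ord t p q"
  unfolding sstr_def using ord_trans by blast
lemma str_trans2: "ord t p r \<Longrightarrow> sstr k ord t r q \<Longrightarrow> sstr k ord t p q"
  unfolding sstr_def using ord_trans by blast

lemma dT_off: "p \<noteq> q \<Longrightarrow> dT k T t $ p $ q = 0"
  using diagT by (auto simp: dT_entry diag_mat_def)

lemma mult_dT_right: "(A ** dT k T t) $ p $ q = A $ p $ q * dT k T t $ q $ q"
proof -
  have "(A ** dT k T t) $ p $ q = (\<Sum>r\<in>UNIV. A $ p $ r * dT k T t $ r $ q)"
    by (simp add: matrix_matrix_mult_def)
  also have "\<dots> = A $ p $ q * dT k T t $ q $ q"
    by (subst sum.remove[of _ q]) (auto simp: dT_off)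
  finally show ?thesis .
qed

lemma mult_dT_left: "(dT k T t ** A) $ p $ q = dT k T t $ p $ p * A $ p $ q"
proof -
  have "(dT k T t ** A) $ p $ q = (\<Sum>r\<in>UNIV. dT k T t $ p $ r * A $ r $ q)"
    by (simp add: matrix_matrix_mult_def)
  also have "\<dots> = dT k T t $ p $ p * A $ p $ q"
    by (subst sum.remove[of _ p]) (auto simp: dT_off)
  finally show ?thesis .
qed

lemma xv_eq: "same_eig k T s p q \<Longrightarrow> s < t \<Longrightarrow> dT k T t $ p $ p = dT k T t $ q $ q"
  by (auto simp: dT_entry same_eig_def)

lemma xv_ne: "T t $ p $ p \<noteq> T t $ q $ q \<Longrightarrow> 1 \<le> t \<Longrightarrow> t < k \<Longrightarrow> dT k T t $ p $ p \<noteq> dT k T t $ q $ q"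
  by (auto simp: dT_entry)

lemma b_supp: "b \<in> P_plus k ord \<Longrightarrow> 1 \<le> a \<Longrightarrow> a \<le> k - 2 \<Longrightarrow> supp (ord a) (b a)"
  unfolding P_plus_def in_p_plus_def supp_def by auto

lemma tinv_supp:
  assumes b: "b \<in> P_plus k ord"
  shows "c \<le> k - 2 \<Longrightarrow> supp (ord c) (tinv b c)"
proof (induction c rule: less_induct)
  case (less c)
  show ?case
  proof (cases c)
    case 0 then show ?thesis using less ord_refl by (auto simp: supp_def mat_def)
  next
    case (Suc n)
    have "supp (ord c) (\<Sum>a\<in>{..n}. b (Suc a) ** tinv b (n - a))"
    proof (rule supp_sum)
      fix a assume a: "a \<in> {..n}"
      have s1: "supp (ord (Suc a)) (b (Suc a))" using b_supp[OF b] a Suc less.prems by simp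
      have s2: "supp (ord (n - a)) (tinv b (n - a))" using less.IH[of "n - a"] Suc less.prems by simp
      show "supp (ord c) (b (Suc a) ** tinv b (n - a))"
      proof (rule supp_mult[OF s1 s2])
        fix p r q assume h1: "ord (Suc a) p r" and h2: "ord (n - a) r q"
        have c2: "c \<le> k - 2" using less.prems .
        have "Suc a \<le> c" "n - a \<le> c" using a Suc by auto
        then have "ord c p r" "ord c r q" using weak_up[OF _ c2] h1 h2 by blast+
        then show "ord c p q" using ord_trans[OF c2] by blast
      qed
    qed
    then show ?thesis using Suc by (simp add: supp_def)
  qed
qed


lemma supp_str_uplus:
  assumes "supp (sstr k ord j) M"
  shows "in_u_plus k ord j M"
proof (cases "k - 1 \<le> j")
  case True
  then have "\<not> j \<le> k - 2" using k1 by arith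
  then have "M = 0" using assms by (auto simp: supp_def sstr_def vec_eq_iff)
  then show ?thesis using True by (simp add: in_u_plus_def)
next
  case False
  then show ?thesis using assms by (auto simp: supp_def sstr_def in_u_plus_def)
qed

lemma coad_sub:
  assumes b: "b \<in> P_plus k ord" and j: "1 \<le> j" "j \<le> k - 1"
  shows "supp (sstr k ord j) (coad k b (dT k T) j - dT k T j)"
proof -
  let ?X = "dT k T"
  let ?C = "\<lambda>a m. b a ** ?X (j + m) - ?X (j + m) ** b a"
  have b0: "b 0 = mat 1" using b by (simp add: P_plus_def in_Bk_def)
  have "coad k b ?X j = (\<Sum>m<k - j. \<Sum>a\<le>m. b a ** ?X (j + m) ** tinv b (m - a))"
    using j k1 by (simp add: coad_shift)
  also have "\<dots> = (\<Sum>m<k - j. (\<Sum>a\<le>m. ?C a m ** tinv b (m - a)) + ?X (j + m) ** (\<Sum>a\<le>m. b a ** tinv b (m - a)))"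
  proof (rule sum.cong[OF refl])
    fix m
    have "\<And>a. b a ** ?X (j + m) ** tinv b (m - a) = ?C a m ** tinv b (m - a) + ?X (j + m) ** (b a ** tinv b (m - a))"
      by (simp add: mdiff_left matrix_mul_assoc)
    then show "(\<Sum>a\<le>m. b a ** ?X (j + m) ** tinv b (m - a)) = (\<Sum>a\<le>m. ?C a m ** tinv b (m - a)) + ?X (j + m) ** (\<Sum>a\<le>m. b a ** tinv b (m - a))"
      by (simp add: sum.distrib msum_right)
  qed
  also have "\<dots> = (\<Sum>m<k - j. \<Sum>a\<le>m. ?C a m ** tinv b (m - a)) + (\<Sum>m<k - j. ?X (j + m) ** (\<Sum>a\<le>m. b a ** tinv b (m - a)))"
    by (rule sum.distrib)
  also have "(\<Sum>m<k - j. ?X (j + m) ** (\<Sum>a\<le>m. b a ** tinv b (m - a))) = (\<Sum>m<k - j. if m = 0 then ?X j else 0)"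
    by (rule sum.cong) (auto simp: tinv_rinv[where b=b, OF b0])
  also have "(\<Sum>m<k - j. if m = 0 then ?X j else 0) = ?X j" using j k1 by simp
  finally have eq: "coad k b ?X j - ?X j = (\<Sum>m<k - j. \<Sum>a\<le>m. ?C a m ** tinv b (m - a))" by simp
  have "supp (sstr k ord j) (\<Sum>m<k - j. \<Sum>a\<le>m. ?C a m ** tinv b (m - a))"
  proof (intro supp_sum)
    fix m a assume m: "m \<in> {..<k - j}" and a: "a \<in> {..m}"
    show "supp (sstr k ord j) (?C a m ** tinv b (m - a))"
    proof (cases "a = 0")
      case True then show ?thesis using b0 by simp
    next
      case False
      define i where "i = j + m"
      have i: "i \<le> k - 1" "a \<le> i - 1" "j \<le> i - 1" "1 \<le> a" "i - 1 \<le> k - 2" "m - a \<le> i - 1"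
        using m a False j unfolding i_def by auto
      have sC: "supp (sstr k ord (i - 1)) (?C a m)"
        unfolding supp_def
      proof (intro allI impI)
        fix p q assume ne: "?C a m $ p $ q \<noteq> 0"
        have e: "?C a m $ p $ q = b a $ p $ q * (?X i $ q $ q - ?X i $ p $ p)"
          by (simp add: mult_dT_right mult_dT_left algebra_simps i_def)
        have "b a $ p $ q \<noteq> 0" "?X i $ q $ q \<noteq> ?X i $ p $ p" using ne e by auto
        then have o1: "ord a p q" "\<not> same_eig k T (i - 1) p q"
          using b_supp[OF b, of a] i xv_eq[of "i - 1" p q i] unfolding supp_def by auto
        then have "ord (i - 1) p q" using weak_up i by blast
        then show "sstr k ord (i - 1) p q" using o1 ord_same[of "i - 1" p q] i by (auto simp: sstr_def)
      qed
      have sT0: "supp (ord (m - a)) (tinv b (m - a))" using tinv_supp[OF b, of "m - a"] i by simp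
      have sT: "supp (ord (i - 1)) (tinv b (m - a))"
        by (rule supp_imp[OF sT0]) (rule weak_up[OF i(6) i(5)])
      show ?thesis
      proof (rule supp_mult[OF sC sT])
        fix p r q assume "sstr k ord (i - 1) p r" "ord (i - 1) r q"
        then have "sstr k ord (i - 1) p q" by (rule str_trans1)
        then show "sstr k ord j p q" using str_down i by blast
      qed
    qed
  qed
  then show ?thesis using eq by simp
qed

lemma subset_part:
  assumes b: "b \<in> P_plus k ord"
  shows "coad k b (dT k T) \<in> (\<lambda>U i. dT k T i + U i) ` U_minus_dual k ord"
proof
  let ?U = "\<lambda>i. coad k b (dT k T) i - dT k T i"
  show "coad k b (dT k T) = (\<lambda>i. dT k T i + ?U i)" by simp
  show "?U \<in> U_minus_dual k ord"
    unfolding U_minus_dual_def in_bkdual_def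
    using coad_sub[OF b] supp_str_uplus by (auto simp: coad_def dT_def)
qed


definition DD :: "'n \<Rightarrow> 'n \<Rightarrow> nat" where "DD p q = (LEAST t. \<not> sstr k ord t p q)"

lemma DD_iff: "sstr k ord t p q \<longleftrightarrow> t < DD p q"
proof
  have "\<not> (k - 1 \<le> k - 2)" using k1 by arith
  then have ex: "\<not> sstr k ord (k - 1) p q" by (simp add: sstr_def)
  have L: "\<not> sstr k ord (DD p q) p q" unfolding DD_def by (rule LeastI[of _ "k - 1"]) (rule ex)
  show "sstr k ord t p q \<Longrightarrow> t < DD p q"
    using L str_down[of "DD p q" t p q] by (metis not_le)
  show "t < DD p q \<Longrightarrow> sstr k ord t p q"
    unfolding DD_def using not_less_Least by blast
qed

lemma DD_le: "DD p q \<le> k - 1"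
proof -
  have "\<not> (k - 1 \<le> k - 2)" using k1 by arith
  then have "\<not> sstr k ord (k - 1) p q" by (simp add: sstr_def)
  then show ?thesis unfolding DD_def by (rule Least_le)
qed

lemma same_lemma:
  assumes "1 \<le> DD p q" "DD p q \<le> t" "t \<le> k - 2"
  shows "same_eig k T t p q"
proof -
  let ?D = "DD p q"
  have s1: "sstr k ord (?D - 1) p q" using assms DD_iff by simp
  have s0: "\<not> sstr k ord ?D p q" using DD_iff by simp
  have D2: "?D \<le> k - 2" using assms by simp
  have o1: "ord ?D p q"
  proof (rule ccontr)
    assume "\<not> ord ?D p q"
    then have "sstr k ord ?D q p" using ord_total[OF D2, of p q] D2 by (simp add: sstr_def)
    then have "sstr k ord (?D - 1) q p" using str_down by (metis diff_le_self)
    then show False using s1 by (simp add: sstr_def)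
  qed
  have "ord ?D q p" using o1 s0 D2 by (simp add: sstr_def)
  then have "same_eig k T ?D p q" using o1 ord_same[OF D2] by blast
  then show ?thesis using assms(2) by (simp add: same_eig_def)
qed

lemma diag_ne:
  assumes "1 \<le> DD p q"
  shows "dT k T (DD p q) $ p $ p \<noteq> dT k T (DD p q) $ q $ q"
proof -
  let ?D = "DD p q"
  have s1: "sstr k ord (?D - 1) p q" using assms DD_iff by simp
  then have "\<not> same_eig k T (?D - 1) p q" using ord_same[of "?D - 1" p q] by (auto simp: sstr_def)
  then obtain t where t: "?D - 1 < t" "t < k" "T t $ p $ p \<noteq> T t $ q $ q"
    unfolding same_eig_def by blast
  have "t = ?D"
  proof (rule ccontr)
    assume "t \<noteq> ?D"
    then have "?D < t" using t by simp
    then have "same_eig k T ?D p q" using same_lemma[of p q ?D] assms t by simp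
    then show False using t \<open>?D < t\<close> by (simp add: same_eig_def)
  qed
  then show ?thesis using xv_ne[of t p q] t assms by simp
qed



lemma U_supp:
  assumes U: "U \<in> U_minus_dual k ord"
  shows "supp (sstr k ord t) (U t)"
proof -
  have u0: "U 0 = 0" "\<And>i. i \<ge> k \<Longrightarrow> U i = 0"
    and u: "\<And>i. 1 \<le> i \<Longrightarrow> i \<le> k - 1 \<Longrightarrow> in_u_plus k ord i (U i)"
    using U unfolding U_minus_dual_def in_bkdual_def by auto
  consider "t = 0" | "t \<ge> k" | "1 \<le> t \<and> t \<le> k - 1" by linarith
  then show ?thesis
  proof cases
    case 3
    then have "in_u_plus k ord t (U t)" using u by simp
    then show ?thesis
    proof (cases "k - 1 \<le> t")
      case True then show ?thesis using \<open>in_u_plus k ord t (U t)\<close> by (simp add: in_u_plus_def)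
    next
      case False then show ?thesis using \<open>in_u_plus k ord t (U t)\<close>
        by (auto simp: in_u_plus_def supp_def sstr_def)
    qed
  qed (use u0 in auto)
qed

lemma sstr_irrefl: "\<not> sstr k ord t p p" by (simp add: sstr_def)

lemma rk_lt:
  assumes "sstr k ord 0 p p'"
  shows "card {r. sstr k ord 0 p' r} < card {r. sstr k ord 0 p r}"
proof (rule psubset_card_mono)
  show "finite {r. sstr k ord 0 p r}" by simp
  have o: "ord 0 p p'" using assms by (simp add: sstr_def)
  have "{r. sstr k ord 0 p' r} \<subseteq> {r. sstr k ord 0 p r}"
  proof
    fix r assume "r \<in> {r. sstr k ord 0 p' r}"
    then have "sstr k ord 0 p' r" by simp
    then show "r \<in> {r. sstr k ord 0 p r}" using str_trans2[OF o] by simp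
  qed
  moreover have "p' \<in> {r. sstr k ord 0 p r} - {r. sstr k ord 0 p' r}" using assms sstr_irrefl by simp
  ultimately show "{r. sstr k ord 0 p' r} \<subset> {r. sstr k ord 0 p r}" by blast
qed

lemma supset_part:
  assumes U: "U \<in> U_minus_dual k ord"
  shows "(\<lambda>i. dT k T i + U i) \<in> (\<lambda>b. coad k b (dT k T)) ` P_plus k ord"
proof -
  let ?X = "dT k T"
  have Us: "\<And>t. supp (sstr k ord t) (U t)" using U_supp[OF U] .
  define I where "I q = {(a,p). 1 \<le> a \<and> sstr k ord a p q}" for q
  define c where "c q i i' = (case i of (a,p) \<Rightarrow> case i' of (a',r) \<Rightarrow>
      (if r = p then ?X (DD p q - a + a') $ q $ q - ?X (DD p q - a + a') $ p $ p else 0)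
       - U (DD p q - a + a') $ p $ r)" for q i i'
  define g where "g q i = (case i of (a,p) \<Rightarrow> U (DD p q - a) $ p $ q)" for q i
  define \<mu> where "\<mu> i = (case i of (a,p) \<Rightarrow> card {r. sstr k ord 0 p r} * k + a)" for i
  have finI: "finite (I q)" for q
  proof (rule finite_subset)
    show "I q \<subseteq> {..k} \<times> UNIV" by (auto simp: I_def sstr_def)
  qed simp
  have "\<forall>q. \<exists>v. \<forall>i\<in>I q. (\<Sum>i'\<in>I q. c q i i' * v i') = g q i"
  proof
    fix q
    show "\<exists>v. \<forall>i\<in>I q. (\<Sum>i'\<in>I q. c q i i' * v i') = g q i"
    proof (rule tri_solve[OF finI])
      fix i assume "i \<in> I q"
      then obtain a p where i: "i = (a,p)" "1 \<le> a" "sstr k ord a p q" by (auto simp: I_def)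
      then have aD: "a < DD p q" using DD_iff by simp
      have "U (DD p q) $ p $ p = 0" using Us[of "DD p q"] sstr_irrefl by (auto simp: supp_def)
      moreover have "?X (DD p q) $ q $ q \<noteq> ?X (DD p q) $ p $ p" using diag_ne[of p q] aD i by simp
      ultimately show "c q i i \<noteq> 0" using i aD by (simp add: c_def)
    next
      fix i i' assume ii: "i \<in> I q" "i' \<in> I q" "i' \<noteq> i" "c q i i' \<noteq> 0"
      then obtain a p a' r where i: "i = (a,p)" "1 \<le> a" "sstr k ord a p q"
        and i': "i' = (a',r)" "1 \<le> a'" "sstr k ord a' r q" by (auto simp: I_def)
      have aD: "a < DD p q" using i DD_iff by simp
      have "a' \<le> k - 2" using i' by (simp add: sstr_def)
      then have a'k: "a' < k" using k1 by linarith
      let ?t = "DD p q - a + a'"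
      show "\<mu> i' < \<mu> i"
      proof (cases "r = p")
        case True
        then have aa: "a' \<noteq> a" using ii i i' by simp
        have "U ?t $ p $ p = 0" using Us[of ?t] sstr_irrefl by (auto simp: supp_def)
        then have ne: "?X ?t $ q $ q \<noteq> ?X ?t $ p $ p" using ii i i' True by (auto simp: c_def)
        have "a' < a"
        proof (rule ccontr)
          assume "\<not> a' < a"
          then have gt: "DD p q < ?t" using aa aD by simp
          show False
          proof (cases "?t < k")
            case False then show False using ne by (simp add: dT_entry)
          next
            case True
            have "same_eig k T (?t - 1) p q" using same_lemma[of p q "?t - 1"] gt aD True by simp
            then have "?X ?t $ p $ p = ?X ?t $ q $ q" by (rule xv_eq) (use gt in simp)
            then show False using ne by simp
          qed
        qed
        then show ?thesis using i i' True by (simp add: \<mu>_def)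
      next
        case False
        then have "U ?t $ p $ r \<noteq> 0" using ii i i' by (simp add: c_def)
        then have "sstr k ord ?t p r" using Us[of ?t] by (simp add: supp_def)
        then have "sstr k ord 0 p r" using str_down by blast
        then have cl: "card {x. sstr k ord 0 r x} + 1 \<le> card {x. sstr k ord 0 p x}" using rk_lt by fastforce
        have "card {x. sstr k ord 0 r x} * k + a' < (card {x. sstr k ord 0 r x} + 1) * k" using a'k by simp
        also have "\<dots> \<le> card {x. sstr k ord 0 p x} * k" using cl by (rule mult_le_mono1)
        finally show ?thesis using i i' by (simp add: \<mu>_def)
      qed
    qed
  qed
  then obtain V where V: "\<And>q i. i \<in> I q \<Longrightarrow> (\<Sum>i'\<in>I q. c q i i' * V q i') = g q i" by metis
  define b where "b a = (if a = 0 then mat 1 else (\<chi> p q. if (a,p) \<in> I q then V q (a,p) else 0))" for a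
  have bent: "b a $ p $ q = (if (a,p) \<in> I q then V q (a,p) else 0)" if "1 \<le> a" for a p q
    using that by (simp add: b_def)
  have b0: "b 0 = mat 1" by (simp add: b_def)
  have bsupp: "supp (sstr k ord a) (b a)" if "1 \<le> a" for a
    using that by (auto simp: supp_def bent I_def)
  have bP: "b \<in> P_plus k ord"
  proof -
    have "b a = 0" if "a \<ge> k" for a
    proof -
      have "1 \<le> a" using that k1 by simp
      moreover have "\<not> a \<le> k - 2" using that k1 by linarith
      then have "(a,p) \<notin> I q" for p q by (simp add: I_def sstr_def)
      ultimately show ?thesis by (simp add: vec_eq_iff bent)
    qed
    moreover have "in_p_plus k ord a (b a)" if "1 \<le> a" for a
      using bsupp[OF that] by (auto simp: in_p_plus_def supp_def sstr_def)
    ultimately show ?thesis using b0 by (auto simp: P_plus_def in_Bk_def)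
  qed
  have conv: "(\<Sum>i\<in>I q. (case i of (a,r) \<Rightarrow> f a r) * V q i) = (\<Sum>a\<in>{1..<k}. \<Sum>r\<in>UNIV. f a r * b a $ r $ q)" for f q
  proof -
    have "(\<Sum>a\<in>{1..<k}. \<Sum>r\<in>UNIV. f a r * b a $ r $ q) = (\<Sum>(a,r)\<in>{1..<k} \<times> UNIV. f a r * b a $ r $ q)"
      by (simp add: sum.cartesian_product)
    also have "\<dots> = (\<Sum>(a,r)\<in>I q. f a r * b a $ r $ q)"
    proof (rule sum.mono_neutral_right)
      show "I q \<subseteq> {1..<k} \<times> UNIV" by (auto simp: I_def sstr_def)
      show "\<forall>i\<in>{1..<k} \<times> UNIV - I q. (case i of (a,r) \<Rightarrow> f a r * b a $ r $ q) = 0"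
        by (auto simp: bent)
    qed simp
    also have "\<dots> = (\<Sum>i\<in>I q. (case i of (a,r) \<Rightarrow> f a r) * V q i)"
      by (rule sum.cong) (auto simp: bent I_def)
    finally show ?thesis by simp
  qed
  have KE: "(\<Sum>a\<in>{1..<k}. b a $ p $ q * (?X (j+a) $ q $ q - ?X (j+a) $ p $ p))
      = U j $ p $ q + (\<Sum>a\<in>{1..<k}. (U (j+a) ** b a) $ p $ q)" if j: "1 \<le> j" for j p q
  proof (cases "sstr k ord j p q")
    case True
    let ?D = "DD p q"
    define a0 where "a0 = ?D - j"
    have jD: "j < ?D" using True DD_iff by simp
    have a0I: "(a0, p) \<in> I q" using jD j DD_iff by (auto simp: I_def a0_def)
    have Dj: "?D - a0 = j" using jD by (simp add: a0_def)
    have Dj2: "\<And>a'. ?D - a0 + a' = j + a'" using Dj by simp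
    have "U j $ p $ q = g q (a0,p)" by (simp add: g_def Dj)
    also have "\<dots> = (\<Sum>i'\<in>I q. c q (a0,p) i' * V q i')" using V[OF a0I] by simp
    also have "\<dots> = (\<Sum>i'\<in>I q. (case i' of (a',r) \<Rightarrow>
        (if r = p then ?X (j + a') $ q $ q - ?X (j + a') $ p $ p else 0) - U (j + a') $ p $ r) * V q i')"
    proof (rule sum.cong[OF refl])
      fix i' assume "i' \<in> I q"
      obtain a' r where i': "i' = (a', r)" by fastforce
      have "c q (a0,p) (a',r) = (if r = p then ?X (j + a') $ q $ q - ?X (j + a') $ p $ p else 0) - U (j + a') $ p $ r"
        unfolding c_def by (simp only: prod.case Dj2)
      then show "c q (a0,p) i' * V q i' = (case i' of (a',r) \<Rightarrow>
        (if r = p then ?X (j + a') $ q $ q - ?X (j + a') $ p $ p else 0) - U (j + a') $ p $ r) * V q i'"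
        using i' by simp
    qed
    also have "\<dots> = (\<Sum>a\<in>{1..<k}. \<Sum>r\<in>UNIV. ((if r = p then ?X (j + a) $ q $ q - ?X (j + a) $ p $ p else 0) - U (j + a) $ p $ r) * b a $ r $ q)"
      by (rule conv)
    also have "\<dots> = (\<Sum>a\<in>{1..<k}. b a $ p $ q * (?X (j+a) $ q $ q - ?X (j+a) $ p $ p) - (U (j+a) ** b a) $ p $ q)"
    proof (rule sum.cong[OF refl])
      fix a
      let ?d = "?X (j + a) $ q $ q - ?X (j + a) $ p $ p"
      have "(\<Sum>r\<in>UNIV. ((if r = p then ?d else 0) - U (j + a) $ p $ r) * b a $ r $ q)
          = (\<Sum>r\<in>UNIV. (if r = p then ?d * b a $ r $ q else 0)) - (\<Sum>r\<in>UNIV. U (j + a) $ p $ r * b a $ r $ q)"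
        by (simp add: left_diff_distrib sum_subtractf if_distrib[of "\<lambda>x. x * _"] cong: if_cong)
      also have "\<dots> = ?d * b a $ p $ q - (U (j+a) ** b a) $ p $ q"
        by (simp add: matrix_matrix_mult_def)
      finally show "(\<Sum>r\<in>UNIV. ((if r = p then ?d else 0) - U (j + a) $ p $ r) * b a $ r $ q)
          = b a $ p $ q * ?d - (U (j+a) ** b a) $ p $ q" by (simp add: mult.commute)
    qed
    finally show ?thesis by (simp add: sum_subtractf)
  next
    case False
    have L: "(\<Sum>a\<in>{1..<k}. b a $ p $ q * (?X (j+a) $ q $ q - ?X (j+a) $ p $ p)) = 0"
    proof (rule sum.neutral, rule ballI)
      fix a assume a: "a \<in> {1..<k}"
      show "b a $ p $ q * (?X (j+a) $ q $ q - ?X (j+a) $ p $ p) = 0"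
      proof (cases "b a $ p $ q = 0")
        case False
        then have "sstr k ord a p q" using bsupp[of a] a by (simp add: supp_def)
        then have aD: "a < DD p q" using DD_iff by simp
        have jD: "DD p q \<le> j" using \<open>\<not> sstr k ord j p q\<close> DD_iff by simp
        have "?X (j+a) $ q $ q = ?X (j+a) $ p $ p"
        proof (cases "j + a < k")
          case True
          have "same_eig k T (j + a - 1) p q" using same_lemma[of p q "j + a - 1"] aD jD True a by simp
          then show ?thesis by (rule xv_eq[symmetric]) (use a in simp)
        qed (simp add: dT_entry)
        then show ?thesis by simp
      qed simp
    qed
    have R1: "U j $ p $ q = 0" using Us[of j] False by (auto simp: supp_def)
    have R2: "(\<Sum>a\<in>{1..<k}. (U (j+a) ** b a) $ p $ q) = 0"
    proof (rule sum.neutral, rule ballI)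
      fix a assume a: "a \<in> {1..<k}"
      have "supp (sstr k ord j) (U (j+a) ** b a)"
      proof (rule supp_mult[OF Us bsupp])
        show "1 \<le> a" using a by simp
        fix x r y assume h: "sstr k ord (j + a) x r" "sstr k ord a r y"
        then have "ord (j+a) r y" using weak_up[of a "j+a" r y] by (simp add: sstr_def)
        then have "sstr k ord (j+a) x y" using str_trans1 h by blast
        then show "sstr k ord j x y" using str_down[of j "j + a"] by simp
      qed
      then show "(U (j+a) ** b a) $ p $ q = 0" using False by (auto simp: supp_def)
    qed
    show ?thesis using L R1 R2 by simp
  qed
  have rel: "(\<Sum>a<k. b a ** ?X (j + a)) = (\<Sum>a<k. (?X (j + a) + U (j + a)) ** b a)" if j: "1 \<le> j" for j
  proof (subst vec_eq_iff, intro allI, subst vec_eq_iff, intro allI)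
    fix p q
    have k0: "{..<k} = insert 0 {1..<k}" using k1 by auto
    have e1: "b a $ p $ q * ?X (j+a) $ q $ q = ?X (j+a) $ p $ p * b a $ p $ q + b a $ p $ q * (?X (j+a) $ q $ q - ?X (j+a) $ p $ p)" for a
      by (simp add: algebra_simps)
    have z: "(mat 1 :: 'n cmat) $ p $ q * (?X j $ q $ q - ?X j $ p $ p) = 0"
      by (cases "p = q") (simp_all add: mat_def)
    have "(\<Sum>a<k. b a $ p $ q * (?X (j+a) $ q $ q - ?X (j+a) $ p $ p)) = (\<Sum>a<k. (U (j+a) ** b a) $ p $ q)"
      unfolding k0 using KE[OF j, of p q] z by (simp add: b0)
    then show "(\<Sum>a<k. b a ** ?X (j + a)) $ p $ q = (\<Sum>a<k. (?X (j + a) + U (j + a)) ** b a) $ p $ q"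
      by (simp add: mult_dT_right madd_left mult_dT_left e1 sum.distrib)
  qed
  have "coad k b ?X = (\<lambda>i. ?X i + U i)"
  proof (rule coad_eq_from_rel[where b=b, OF b0])
    have u0: "U 0 = 0" "\<And>i. i \<ge> k \<Longrightarrow> U i = 0" using U unfolding U_minus_dual_def in_bkdual_def by auto
    show "\<And>i. k \<le> i \<Longrightarrow> ?X i = 0" by (simp add: dT_def)
    show "\<And>i. k \<le> i \<Longrightarrow> ?X i + U i = 0" using u0 by (simp add: dT_def)
    show "?X 0 + U 0 = 0" using u0 by (simp add: dT_def)
    show "\<And>j. 1 \<le> j \<Longrightarrow> (\<Sum>a<k. b a ** ?X (j + a)) = (\<Sum>a<k. (?X (j + a) + U (j + a)) ** b a)"
      by (rule rel)
  qed
  then show ?thesis using bP by (metis image_eqI)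
qed

end

theorem lemma3p8:
  fixes k :: nat and T :: "nat \<Rightarrow> 'n::finite cmat"
    and ord :: "nat \<Rightarrow> 'n \<Rightarrow> 'n \<Rightarrow> bool"
  assumes "k > 1"
    and "\<forall>i. 1 \<le> i \<and> i \<le> k - 1 \<longrightarrow> diag_mat (T i)"
    and "T (k - 1) \<noteq> 0"
    and "admissible_orders k T ord"
  shows "(\<lambda>b. coad k b (dT k T)) ` P_plus k ord = (\<lambda>U i. dT k T i + U i) ` U_minus_dual k ord"
proof
  show "(\<lambda>b. coad k b (dT k T)) ` P_plus k ord \<subseteq> (\<lambda>U i. dT k T i + U i) ` U_minus_dual k ord"
    using subset_part[OF assms(1) assms(2) assms(4)] by blast
  show "(\<lambda>U i. dT k T i + U i) ` U_minus_dual k ord \<subseteq> (\<lambda>b. coad k b (dT k T)) ` P_plus k ord"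
    using supset_part[OF assms(1) assms(2) assms(4)] by blast
qed

end
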